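(* Let $k\in\mathbb{F}$ be nonzero and for $j\in\tfrac12\mathbb{N}^+$ let $D^{(j)}=\mathrm{diag}(1,k,k^2,\dots,k^{2j})$. Then for all $j_1,j_2\in\tfrac12\mathbb{N}^+$, \[ \big(D^{(j_1)}\otimes D^{(j_2)}\big)R^{(j_1,j_2)}(t)=R^{(j_1,j_2)}(t)\big(D^{(j_1)}\otimes D^{(j_2)}\big). \]
   Context: $\mathbb{F}$ is a field of characteristic zero in which every element has a square root; $q\in\mathbb{F}$ nonzero, not a root of unity, with fixed square root $q^{1/2}$ ($q^{k/2}:=(q^{1/2})^{k}$ for integers); other $(\cdot)^{1/2}$ are fixed square roots in $\mathbb{F}$. $[n]_q=\frac{q^n-q^{-n}}{q-q^{-1}}$, $c(t)=t-t^{-1}$, $\tfrac12\mathbb{N}^+=\{\tfrac12,1,\tfrac32,\dots\}$, $t$ an indeterminate, $\otimes$ Kronecker product. Leg notation: for factors $\mathbb{F}^{n_1}\otimes\mathbb{F}^{n_2}\otimes\mathbb{F}^{n_3}$, $X_{12}=X\otimes I_{n_3}$, $X_{23}=I_{n_1}\otimes X$, $X_{13}=P(X\otimes I_{n_2})P$ with $P$ the flip of factors 2,3; for non-square $Y$, $Y_{12}=Y\otimes I_{n_3}$, $Y_{23}=I_{n_1}\otimes Y$. For $j\in\tfrac12\mathbb{N}^+$: $\mathcal{E}^{(j+\frac12)}$ is $(4j+2)\times(2j+2)$ with only nonzero entries $\mathcal{E}_{(a,a)}=\big(\frac{[2j+2-a]_q}{[2j+1]_q}\big)^{1/2}$, $\mathcal{E}_{(a+2j+1,a+1)}=\big(\frac{[a]_q}{[2j+1]_q}\big)^{1/2}$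 ($1\le a\le 2j+1$); $\mathcal{F}^{(j+\frac12)}$ is $(2j+2)\times(4j+2)$ with only nonzero entries $\mathcal{F}_{(a,a)}=\frac{([2j+2-a]_q[2j+1]_q)^{1/2}}{[2j+2-a]_q+[a-1]_q}$, $\mathcal{F}_{(a+1,a+2j+1)}=\frac{([a]_q[2j+1]_q)^{1/2}}{[2j+1-a]_q+[a]_q}$ ($1\le a\le 2j+1$). $R^{(\frac12,\frac12)}(t)$ is the $4\times4$ matrix with rows $(c(qt),0,0,0),(0,c(t),c(q),0),(0,c(q),c(t),0),(0,0,0,c(qt))$; recursively $R^{(\frac12,j+\frac12)}(t)=\mathcal{F}^{(j+\frac12)}_{23}R^{(\frac12,j)}_{13}(q^{-1/2}t)R^{(\frac12,\frac12)}_{12}(q^{j}t)\mathcal{E}^{(j+\frac12)}_{23}$ (factor sizes $2,2,2j+1$) and $R^{(j_1+\frac12,j_2)}(t)=\mathcal{F}^{(j_1+\frac12)}_{12}R^{(\frac12,j_2)}_{13}(q^{-j_1}t)R^{(j_1,j_2)}_{23}(q^{1/2}t)\mathcal{E}^{(j_1+\frac12)}_{12}$ (factor sizes $2,2j_1+1,2j_2+1$). *)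

theory Defs
  imports "Jordan_Normal_Form.Matrix"
begin

text \<open>Spin j in 1/2 N^+ is encoded by n = 2j (a positive natural); the
  spin-j space has dimension n+1. Indices are 0-based.\<close>

definition qnum :: "'a::field \<Rightarrow> nat \<Rightarrow> 'a" where
  "qnum q n = (q ^ n - inverse (q ^ n)) / (q - inverse q)"

definition cfun :: "'a::field \<Rightarrow> 'a" where
  "cfun t = t - inverse t"

definition kron :: "'a::semiring_0 mat \<Rightarrow> 'a mat \<Rightarrow> 'a mat" where
  "kron A B = mat (dim_row A * dim_row B) (dim_col A * dim_col B)
     (\<lambda>(i,j). A $$ (i div dim_row B, j div dim_col B) * B $$ (i mod dim_row B, j mod dim_col B))"

definition leg12 :: "nat \<Rightarrow> 'a::semiring_1 mat \<Rightarrow> 'a mat" where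
  "leg12 n3 X = kron X (1\<^sub>m n3)"

definition leg23 :: "nat \<Rightarrow> 'a::semiring_1 mat \<Rightarrow> 'a mat" where
  "leg23 n1 X = kron (1\<^sub>m n1) X"

text \<open>X_13 = P (X \<otimes> I_n2) P with P the flip of factors 2,3, written entrywise:
  it acts as X on factors 1,3 and as the identity on factor 2.\<close>
definition leg13 :: "nat \<Rightarrow> nat \<Rightarrow> nat \<Rightarrow> 'a::semiring_1 mat \<Rightarrow> 'a mat" where
  "leg13 n1 n2 n3 X = mat (n1*n2*n3) (n1*n2*n3) (\<lambda>(i,j).
     if (i div n3) mod n2 = (j div n3) mod n2
     then X $$ ((i div (n2*n3)) * n3 + i mod n3, (j div (n2*n3)) * n3 + j mod n3)
     else 0)"

text \<open>E^{(j+1/2)} for n = 2j: a (2n+2) x (n+2) matrix; sr is the fixed square-root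
  function.  1-based entries (a,a) and (a+n+1,a+1), 1 <= a <= n+1.\<close>
definition Emat :: "('a::field \<Rightarrow> 'a) \<Rightarrow> 'a \<Rightarrow> nat \<Rightarrow> 'a mat" where
  "Emat sr q n = mat (2*n+2) (n+2) (\<lambda>(i,j).
     if i \<le> n \<and> j = i then sr (qnum q (n+1-i) / qnum q (n+1))
     else if n+1 \<le> i \<and> i \<le> 2*n+1 \<and> j = i - n then sr (qnum q (i-n) / qnum q (n+1))
     else 0)"

definition Fmat :: "('a::field \<Rightarrow> 'a) \<Rightarrow> 'a \<Rightarrow> nat \<Rightarrow> 'a mat" where
  "Fmat sr q n = mat (n+2) (2*n+2) (\<lambda>(i,j).
     if j \<le> n \<and> i = j then
        sr (qnum q (n+1-j) * qnum q (n+1)) / (qnum q (n+1-j) + qnum q j)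
     else if n+1 \<le> j \<and> j \<le> 2*n+1 \<and> i = j - n then
        sr (qnum q (j-n) * qnum q (n+1)) / (qnum q (2*n+1-j) + qnum q (j-n))
     else 0)"

definition R0 :: "'a::field \<Rightarrow> 'a \<Rightarrow> 'a mat" where
  "R0 q t = mat 4 4 (\<lambda>(i,j).
     if (i = 0 \<and> j = 0) \<or> (i = 3 \<and> j = 3) then cfun (q*t)
     else if (i = 1 \<and> j = 1) \<or> (i = 2 \<and> j = 2) then cfun t
     else if (i = 1 \<and> j = 2) \<or> (i = 2 \<and> j = 1) then cfun q
     else 0)"

text \<open>Rmat sr q qh n1 n2 t = R^{(n1/2, n2/2)}(t); qh is the fixed square root of q.\<close>
fun Rmat :: "('a::field \<Rightarrow> 'a) \<Rightarrow> 'a \<Rightarrow> 'a \<Rightarrow> nat \<Rightarrow> nat \<Rightarrow> 'a \<Rightarrow> 'a mat" where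
  "Rmat sr q qh 0 n2 t = 0\<^sub>m 0 0"
| "Rmat sr q qh (Suc 0) 0 t = 0\<^sub>m 0 0"
| "Rmat sr q qh (Suc 0) (Suc 0) t = R0 q t"
| "Rmat sr q qh (Suc 0) (Suc (Suc n)) t =
     leg23 2 (Fmat sr q (Suc n))
     * leg13 2 2 (Suc n + 1) (Rmat sr q qh (Suc 0) (Suc n) (inverse qh * t))
     * leg12 (Suc n + 1) (Rmat sr q qh (Suc 0) (Suc 0) (qh ^ (Suc n) * t))
     * leg23 2 (Emat sr q (Suc n))"
| "Rmat sr q qh (Suc (Suc m)) n2 t =
     leg12 (n2 + 1) (Fmat sr q (Suc m))
     * leg13 2 (Suc m + 1) (n2 + 1) (Rmat sr q qh (Suc 0) n2 (inverse (qh ^ (Suc m)) * t))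
     * leg23 2 (Rmat sr q qh (Suc m) n2 (qh * t))
     * leg12 (n2 + 1) (Emat sr q (Suc m))"

definition Dmat :: "'a::field \<Rightarrow> nat \<Rightarrow> 'a mat" where
  "Dmat k n = mat (n+1) (n+1) (\<lambda>(i,j). if i = j then k ^ i else 0)"

end

theory Submission
  imports Defs
begin
definition wp :: "(nat \<Rightarrow> nat) \<Rightarrow> (nat \<Rightarrow> nat) \<Rightarrow> 'a::semiring_0 mat \<Rightarrow> bool" where
 "wp wr wc M = (\<forall>i<dim_row M. \<forall>j<dim_col M. M $$ (i,j) \<noteq> 0 \<longrightarrow> wr i = wc j)"

lemma wp_mult:
  assumes "dim_col A = dim_row B" "wp wr wm A" "wp wm wc B"
  shows "wp wr wc (A * B)"
  unfolding wp_def
proof (intro allI impI)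
  fix i j assume i: "i < dim_row (A*B)" and j: "j < dim_col (A*B)" and nz: "(A*B) $$ (i,j) \<noteq> 0"
  have "(A*B) $$ (i,j) = (\<Sum>l\<in>{0..<dim_row B}. A $$ (i,l) * B $$ (l,j))"
    using i j assms(1) by (simp add: scalar_prod_def)
  with nz obtain l where l: "l < dim_row B" "A $$ (i,l) * B $$ (l,j) \<noteq> 0"
    by (metis (no_types, lifting) atLeastLessThan_iff sum.neutral)
  then show "wr i = wc j" using assms i j unfolding wp_def
    by (metis index_mult_mat(2,3) mult_not_zero)
qed

lemma wp_cong:
  assumes "wp wr wc M" "\<And>i. i < dim_row M \<Longrightarrow> wr i = wr' i" "\<And>j. j < dim_col M \<Longrightarrow> wc j = wc' j"
  shows "wp wr' wc' M"
  using assms unfolding wp_def by metis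

lemma dim_kron[simp]: "dim_row (kron A B) = dim_row A * dim_row B" "dim_col (kron A B) = dim_col A * dim_col B"
  by (simp_all add: kron_def)

lemma less_mult_div: "i < a * (b::nat) \<Longrightarrow> i div b < a"
  by (simp add: less_mult_imp_div_less)
lemma less_mult_mod: "i < a * (b::nat) \<Longrightarrow> i mod b < b"
  by (metis mod_less_divisor mult_zero_right not_less_zero neq0_conv)

lemma wp_kron:
  assumes "wp wa wa' A" "wp wb wb' B"
  shows "wp (\<lambda>i. wa (i div dim_row B) + wb (i mod dim_row B))
            (\<lambda>j. wa' (j div dim_col B) + wb' (j mod dim_col B)) (kron A B)"
  unfolding wp_def
proof (intro allI impI)
  fix i j assume i: "i < dim_row (kron A B)" and j: "j < dim_col (kron A B)" and nz: "kron A B $$ (i,j) \<noteq> 0"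
  have i': "i < dim_row A * dim_row B" and j': "j < dim_col A * dim_col B" using i j by auto
  have "kron A B $$ (i,j) = A $$ (i div dim_row B, j div dim_col B) * B $$ (i mod dim_row B, j mod dim_col B)"
    using i' j' by (simp add: kron_def)
  with nz show "wa (i div dim_row B) + wb (i mod dim_row B) = wa' (j div dim_col B) + wb' (j mod dim_col B)"
    using assms i' j' less_mult_div[OF i'] less_mult_div[OF j'] less_mult_mod[OF i'] less_mult_mod[OF j']
    unfolding wp_def by (metis mult_not_zero)
qed

lemma wp_one: "wp w w (1\<^sub>m n)"
  unfolding wp_def by auto

lemma wp_leg13:
  assumes "wp (\<lambda>i. (i div n3) + (i mod n3)) (\<lambda>i. (i div n3) + (i mod n3)) X"
    "dim_row X = n1 * n3" "dim_col X = n1 * n3"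
  shows "wp (\<lambda>i. (i div (n2*n3)) + (i div n3) mod n2 + (i mod n3))
            (\<lambda>i. (i div (n2*n3)) + (i div n3) mod n2 + (i mod n3)) (leg13 n1 n2 n3 X)"
  unfolding wp_def
proof (intro allI impI)
  fix i j assume i: "i < dim_row (leg13 n1 n2 n3 X)" and j: "j < dim_col (leg13 n1 n2 n3 X)"
    and nz: "leg13 n1 n2 n3 X $$ (i,j) \<noteq> 0"
  have i': "i < n1*n2*n3" and j': "j < n1*n2*n3" using i j by (auto simp: leg13_def)
  define i1 where "i1 = (i div (n2*n3)) * n3 + i mod n3"
  define j1 where "j1 = (j div (n2*n3)) * n3 + j mod n3"
  have mid: "(i div n3) mod n2 = (j div n3) mod n2" and xnz: "X $$ (i1, j1) \<noteq> 0"
    using nz i' j' by (auto simp: leg13_def i1_def j1_def split: if_splits)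
  have n3: "n3 > 0" using i' by (metis mult_0_right not_less_zero neq0_conv)
  have "i div (n2*n3) < n1" using i' by (metis less_mult_div mult.assoc)
  have b: "i mod n3 < n3" using n3 by simp
  have "i1 < n1 * n3"
  proof -
    have "i1 < (i div (n2*n3)) * n3 + n3" unfolding i1_def using b by simp
    also have "\<dots> = (i div (n2*n3) + 1) * n3" by simp
    also have "\<dots> \<le> n1 * n3" using \<open>i div (n2*n3) < n1\<close> by (intro mult_right_mono) auto
    finally show ?thesis .
  qed
  have jd: "j div (n2*n3) < n1" using j' by (metis less_mult_div mult.assoc)
  have "j1 < n1 * n3"
  proof -
    have "j1 < (j div (n2*n3)) * n3 + n3" unfolding j1_def using n3 by simp
    also have "\<dots> = (j div (n2*n3) + 1) * n3" by simp
    also have "\<dots> \<le> n1 * n3" using jd by (intro mult_right_mono) auto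
    finally show ?thesis .
  qed
  have i1d: "i1 div n3 = i div (n2*n3)" "i1 mod n3 = i mod n3" unfolding i1_def using n3 by auto
  have j1d: "j1 div n3 = j div (n2*n3)" "j1 mod n3 = j mod n3" unfolding j1_def using n3 by auto
  have "(i1 div n3) + (i1 mod n3) = (j1 div n3) + (j1 mod n3)"
    using assms(1) xnz \<open>i1 < n1*n3\<close> \<open>j1 < n1*n3\<close> assms(2,3) unfolding wp_def by auto
  then show "(i div (n2*n3)) + (i div n3) mod n2 + (i mod n3) = (j div (n2*n3)) + (j div n3) mod n2 + (j mod n3)"
    using i1d j1d mid by simp
qed

lemma div_mod_id: "((j::nat) mod (a*b)) div b = (j div b) mod a"
proof (cases "b = 0")
  case False
  have "j mod (a*b) = b * (j div b mod a) + j mod b" by (metis mod_mult2_eq mult.commute)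
  then show ?thesis using False by simp
qed simp
lemma mod_mod_id: "((j::nat) mod (a*b)) mod b = j mod b"
  by (simp add: mod_mod_cancel)


lemma wp_F: "wp (\<lambda>i. i) (\<lambda>j. j div (n+1) + j mod (n+1)) (Fmat sr q n)"
  unfolding wp_def
proof (intro allI impI)
  fix i j assume i: "i < dim_row (Fmat sr q n)" and j: "j < dim_col (Fmat sr q n)" and nz: "Fmat sr q n $$ (i,j) \<noteq> 0"
  have i': "i < n+2" and j': "j < 2*n+2" using i j by (auto simp: Fmat_def)
  show "i = j div (n+1) + j mod (n+1)"
  proof (cases "j \<le> n")
    case True
    then show ?thesis using nz i' j' by (auto simp: Fmat_def split: if_splits)
  next
    case False
    then have "j div (n+1) = 1" "j mod (n+1) = j - (n+1)" using j'
      by (auto simp: div_if mod_if)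
    then show ?thesis using nz i' j' False by (auto simp: Fmat_def split: if_splits)
  qed
qed

lemma wp_E: "wp (\<lambda>i. i div (n+1) + i mod (n+1)) (\<lambda>j. j) (Emat sr q n)"
  unfolding wp_def
proof (intro allI impI)
  fix i j assume i: "i < dim_row (Emat sr q n)" and j: "j < dim_col (Emat sr q n)" and nz: "Emat sr q n $$ (i,j) \<noteq> 0"
  have i': "i < 2*n+2" and j': "j < n+2" using i j by (auto simp: Emat_def)
  show "i div (n+1) + i mod (n+1) = j"
  proof (cases "i \<le> n")
    case True
    then show ?thesis using nz i' j' by (auto simp: Emat_def split: if_splits)
  next
    case False
    then have "i div (n+1) = 1" "i mod (n+1) = i - (n+1)" using i'
      by (auto simp: div_if mod_if)
    then show ?thesis using nz i' j' False by (auto simp: Emat_def split: if_splits)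
  qed
qed

lemma wp_R0: "wp (\<lambda>i. i div 2 + i mod 2) (\<lambda>i. i div 2 + i mod 2) (R0 q t)"
  unfolding wp_def
proof (intro allI impI)
  fix i j assume i: "i < dim_row (R0 q t)" and j: "j < dim_col (R0 q t)" and nz: "R0 q t $$ (i,j) \<noteq> 0"
  have i': "i < 4" and j': "j < 4" using i j by (auto simp: R0_def)
  have "i \<in> {0,1,2,3}" "j \<in> {0,1,2,3}" using i' j' by auto
  then show "i div 2 + i mod 2 = j div 2 + j mod 2" using nz i' j' by (auto simp: R0_def)
qed


lemma dims_F[simp]: "dim_row (Fmat sr q n) = n+2" "dim_col (Fmat sr q n) = 2*n+2"
  by (simp_all add: Fmat_def)
lemma dims_E[simp]: "dim_row (Emat sr q n) = 2*n+2" "dim_col (Emat sr q n) = n+2"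
  by (simp_all add: Emat_def)
lemma dims_R0[simp]: "dim_row (R0 q t) = 4" "dim_col (R0 q t) = 4"
  by (simp_all add: R0_def)
lemma dims_leg13[simp]: "dim_row (leg13 a b c X) = a*b*c" "dim_col (leg13 a b c X) = a*b*c"
  by (simp_all add: leg13_def)

lemma R_props:
  "1 \<le> n1 \<Longrightarrow> 1 \<le> n2 \<Longrightarrow> dim_row (Rmat sr q qh n1 n2 t) = (n1+1)*(n2+1)
     \<and> dim_col (Rmat sr q qh n1 n2 t) = (n1+1)*(n2+1)
     \<and> wp (\<lambda>i. i div (n2+1) + i mod (n2+1)) (\<lambda>i. i div (n2+1) + i mod (n2+1)) (Rmat sr q qh n1 n2 t)"
proof (induction sr q qh n1 n2 t rule: Rmat.induct)
  case (3 sr q qh t)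
  then show ?case using wp_R0[of q t] by (simp add: numeral_2_eq_2)
next
  case (4 sr q qh n t)
  define R1 where "R1 = Rmat sr q qh (Suc 0) (Suc n) (inverse qh * t)"
  have IH: "dim_row R1 = 2*(n+2)" "dim_col R1 = 2*(n+2)"
     "wp (\<lambda>i. i div (n+2) + i mod (n+2)) (\<lambda>i. i div (n+2) + i mod (n+2)) R1"
    using "4.IH" unfolding R1_def by auto
  define W where "W = (\<lambda>i::nat. i div (n+3) + i mod (n+3))"
  define M where "M = (\<lambda>i::nat. i div (2*(n+2)) + (i div (n+2)) mod 2 + i mod (n+2))"
  have A: "wp W M (leg23 2 (Fmat sr q (Suc n)))"
    unfolding leg23_def
    apply (rule wp_cong[OF wp_kron[OF wp_one wp_F]])
    using div_mod_id[of _ 2 "n+2"] mod_mod_id[of _ 2 "n+2"]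
    by (auto simp: W_def M_def algebra_simps)
  have e: "Suc n + 1 = n + 2" by simp
  have B: "wp M M (leg13 2 2 (Suc n + 1) R1)" unfolding e
    apply (rule wp_cong[OF wp_leg13[OF IH(3) IH(1,2)]])
    using IH by (auto simp: M_def algebra_simps)
  have C: "wp M M (leg12 (Suc n + 1) (R0 q (qh ^ Suc n * t)))"
    unfolding leg12_def
    apply (rule wp_cong[OF wp_kron[OF wp_R0 wp_one[of "\<lambda>i. i"]]])
    using div_mult2_eq[of _ "n+2" 2] by (auto simp: M_def mult.commute)
  have D: "wp M W (leg23 2 (Emat sr q (Suc n)))"
    unfolding leg23_def
    apply (rule wp_cong[OF wp_kron[OF wp_one wp_E]])
    using div_mod_id[of _ 2 "n+2"] mod_mod_id[of _ 2 "n+2"]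
    by (auto simp: W_def M_def algebra_simps)
  have "wp W W (leg23 2 (Fmat sr q (Suc n)) * leg13 2 2 (Suc n + 1) R1 * leg12 (Suc n + 1) (R0 q (qh ^ Suc n * t)) * leg23 2 (Emat sr q (Suc n)))"
    apply (intro wp_mult[OF _ _ D] wp_mult[OF _ _ C] wp_mult[OF _ A B])
    using IH by (auto simp: leg12_def leg23_def)
  then show ?case unfolding R1_def W_def
    by (simp add: leg12_def leg23_def algebra_simps)
next
  case (5 sr q qh m n2 t)
  define R1 where "R1 = Rmat sr q qh (Suc 0) n2 (inverse (qh ^ Suc m) * t)"
  define R2 where "R2 = Rmat sr q qh (Suc m) n2 (qh * t)"
  have IH1: "dim_row R1 = 2*(n2+1)" "dim_col R1 = 2*(n2+1)"
     "wp (\<lambda>i. i div (n2+1) + i mod (n2+1)) (\<lambda>i. i div (n2+1) + i mod (n2+1)) R1"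
    using "5.IH"(1) "5.prems" unfolding R1_def by auto
  have IH2: "dim_row R2 = (m+2)*(n2+1)" "dim_col R2 = (m+2)*(n2+1)"
     "wp (\<lambda>i. i div (n2+1) + i mod (n2+1)) (\<lambda>i. i div (n2+1) + i mod (n2+1)) R2"
    using "5.IH"(2) "5.prems" unfolding R2_def by auto
  define W where "W = (\<lambda>i::nat. i div (n2+1) + i mod (n2+1))"
  define M where "M = (\<lambda>i::nat. i div ((m+2)*(n2+1)) + (i div (n2+1)) mod (m+2) + i mod (n2+1))"
  have A: "wp W M (leg12 (n2 + 1) (Fmat sr q (Suc m)))"
    unfolding leg12_def
    apply (rule wp_cong[OF wp_kron[OF wp_F wp_one[of "\<lambda>i. i"]]])
    using div_mult2_eq[of _ "n2+1" "m+2"] by (auto simp: W_def M_def mult.commute)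
  have e: "Suc m + 1 = m + 2" by simp
  have B: "wp M M (leg13 2 (Suc m + 1) (n2 + 1) R1)" unfolding e
    apply (rule wp_cong[OF wp_leg13[OF IH1(3) IH1(1,2)]])
    using IH1 by (auto simp: M_def algebra_simps)
  have C: "wp M M (leg23 2 R2)"
    unfolding leg23_def
    apply (rule wp_cong[OF wp_kron[OF wp_one IH2(3)]])
    using IH2 div_mod_id[of _ "m+2" "n2+1"] mod_mod_id[of _ "m+2" "n2+1"]
    by (auto simp: M_def algebra_simps)
  have D: "wp M W (leg12 (n2 + 1) (Emat sr q (Suc m)))"
    unfolding leg12_def
    apply (rule wp_cong[OF wp_kron[OF wp_E wp_one[of "\<lambda>i. i"]]])
    using div_mult2_eq[of _ "n2+1" "m+2"] by (auto simp: W_def M_def mult.commute)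
  have "wp W W (leg12 (n2 + 1) (Fmat sr q (Suc m)) * leg13 2 (Suc m + 1) (n2 + 1) R1 * leg23 2 R2 * leg12 (n2 + 1) (Emat sr q (Suc m)))"
    apply (intro wp_mult[OF _ _ D] wp_mult[OF _ _ C] wp_mult[OF _ A B])
    using IH1 IH2 by (auto simp: leg12_def leg23_def algebra_simps)
  then show ?case unfolding R1_def R2_def W_def
    by (simp add: leg12_def leg23_def algebra_simps)
qed auto


lemma kronD: "kron (Dmat k n1) (Dmat k n2) = mat ((n1+1)*(n2+1)) ((n1+1)*(n2+1))
   (\<lambda>(i,j). if i = j then k ^ (i div (n2+1) + i mod (n2+1)) else 0)"
proof (rule eq_matI)
  fix i j assume i: "i < dim_row (mat ((n1+1)*(n2+1)) ((n1+1)*(n2+1))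
   (\<lambda>(i,j). if i = j then k ^ (i div (n2+1) + i mod (n2+1)) else (0::'a)))"
    and j: "j < dim_col (mat ((n1+1)*(n2+1)) ((n1+1)*(n2+1))
   (\<lambda>(i,j). if i = j then k ^ (i div (n2+1) + i mod (n2+1)) else (0::'a)))"
  have i': "i < (n1+1)*(n2+1)" and j': "j < (n1+1)*(n2+1)" using i j by auto
  have eq: "(i div (n2+1) = j div (n2+1) \<and> i mod (n2+1) = j mod (n2+1)) = (i = j)"
    by (metis div_mult_mod_eq)
  show "kron (Dmat k n1) (Dmat k n2) $$ (i, j) = mat ((n1+1)*(n2+1)) ((n1+1)*(n2+1))
   (\<lambda>(i,j). if i = j then k ^ (i div (n2+1) + i mod (n2+1)) else 0) $$ (i, j)"
    using i' j' less_mult_div[OF i'] less_mult_div[OF j'] eq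
    by (auto simp: kron_def Dmat_def power_add)
qed (auto simp: kron_def Dmat_def)

lemma sum_delta_l: "i < (N::nat) \<Longrightarrow> (\<Sum>l = 0..<N. (if i = l then f l else 0) * g l) = f i * (g i :: 'a::field)"
proof -
  assume "i < N"
  have "(\<Sum>l = 0..<N. (if i = l then f l else 0) * g l) = (\<Sum>l = 0..<N. if l = i then f i * g i else 0)"
    by (rule sum.cong) auto
  then show ?thesis using \<open>i < N\<close> by simp
qed
lemma sum_delta_r: "j < (N::nat) \<Longrightarrow> (\<Sum>l = 0..<N. g l * (if l = j then f l else 0)) = g j * (f j :: 'a::field)"
proof -
  assume "j < N"
  have "(\<Sum>l = 0..<N. g l * (if l = j then f l else 0)) = (\<Sum>l = 0..<N. if l = j then g j * f j else 0)"
    by (rule sum.cong) auto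
  then show ?thesis using \<open>j < N\<close> by simp
qed

lemma diag_comm:
  fixes M :: "'a::field mat"
  assumes "dim_row M = N" "dim_col M = N" "wp w w M"
  shows "mat N N (\<lambda>(i,j). if i = j then k ^ w i else 0) * M = M * mat N N (\<lambda>(i,j). if i = j then k ^ w i else 0)"
proof (rule eq_matI)
  fix i j assume i: "i < dim_row (M * mat N N (\<lambda>(i,j). if i = j then k ^ w i else 0))"
    and j: "j < dim_col (M * mat N N (\<lambda>(i,j). if i = j then k ^ w i else 0))"
  have i': "i < N" and j': "j < N" using i j assms by auto
  have L: "(mat N N (\<lambda>(i,j). if i = j then k ^ w i else 0) * M) $$ (i,j) = k ^ w i * M $$ (i,j)"
    using i' j' assms by (simp add: scalar_prod_def sum_delta_l sum_delta_r)
  have R: "(M * mat N N (\<lambda>(i,j). if i = j then k ^ w i else 0)) $$ (i,j) = M $$ (i,j) * k ^ w j"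
    using i' j' assms by (simp add: scalar_prod_def sum_delta_l sum_delta_r)
  have "k ^ w i * M $$ (i,j) = M $$ (i,j) * k ^ w j"
    using assms(3) i' j' assms(1,2) unfolding wp_def by (cases "M $$ (i,j) = 0") auto
  then show "(mat N N (\<lambda>(i,j). if i = j then k ^ w i else 0) * M) $$ (i,j) = (M * mat N N (\<lambda>(i,j). if i = j then k ^ w i else 0)) $$ (i,j)"
    using L R by simp
qed (use assms in auto)

theorem lemmaB2:
  fixes q qh k t :: "'a::field_char_0" and sr :: "'a \<Rightarrow> 'a" and n1 n2 :: nat
  assumes sqrt_fun: "\<forall>x. sr x * sr x = x"
    and qh: "qh * qh = q"
    and q_nz: "q \<noteq> 0"
    and q_not_root: "\<forall>m::nat. m > 0 \<longrightarrow> q ^ m \<noteq> 1"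
    and k_nz: "k \<noteq> 0"
    and t_nz: "t \<noteq> 0"
    and n1: "n1 \<ge> 1" and n2: "n2 \<ge> 1"
  shows "kron (Dmat k n1) (Dmat k n2) * Rmat sr q qh n1 n2 t
       = Rmat sr q qh n1 n2 t * kron (Dmat k n1) (Dmat k n2)"
  using R_props[OF n1 n2, of sr q qh t] unfolding kronD
  by (intro diag_comm[where w = "\<lambda>i. i div (n2+1) + i mod (n2+1)"]) auto

end
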